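(* Let $T$ be a left-linear term rewriting system, $\mathcal{A}$ a reduction sequence of $T$ and $\psi$ a stepwise-or-normal proof term that denotes $\mathcal{A}$. Then $mind(\psi)=mind(\mathcal{A})$; $\psi$ is convergent if and only if $\mathcal{A}$ is convergent; and in that case $tgt(\psi)=tgt(\mathcal{A})$.
   Context: Setting. $T=(\Sigma,R)$: $\Sigma$ finite; rules $\mu:l\to r$ with $l$ finite, non-variable, linear, variables of $r$ among those of $l$; terms finite or infinite; $d(t,u)=0$ if $t=u$, else $2^{-k}$, $k$ the least depth where they differ. Reduction sequences. A reduction step $a=\langle t,p,\mu,\sigma\rangle$ has $t|_p=\sigma l$, $src(a)=t$, $tgt(a)=t[\sigma r]_p$, depth $|p|$. A reduction sequence is $id_t$ (length $0$, source and target $t$) or $\langle a_\alpha\rangle_{\alpha<\beta}$, $\beta>0$, with $src(a_{\alpha+1})=tgt(a_\alpha)$ for $\alpha+1<\beta$, and for each limit $\beta_0<\beta$: $\lim_{\alpha\to\beta_0}tgt(a_\alpha)$ exists and equals $src(a_{\beta_0})$, and depths of $a_\alpha$ tend to infinity as $\alpha\to\beta_0$ (for every $n$ there is $\beta'<\beta_0$ with depth $>n$ for $\beta'<\alpha<\beta_0$). It is convergent iff it is empty, or $\beta$ is a successor, or $\beta$ is a limit and the limit-existence and depth conditions also hold at $\beta$. Its target (for convergent sequences) is $tgt(a_{\beta'})$ if $\beta=\beta'+1$ and $\lim_{\alpha\to\beta}tgt(a_\alpha)$ if $\beta$ is a limit. $mind(\mathcal{A})$ is $\omega$ for $id_t$,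 otherwise the minimum depth of its steps. Proof terms. $\Sigma^R$ extends $\Sigma$ by a symbol $\mu$ of arity $n$ per rule ($n$ distinct variables of $l$). A one-step is a closed term over $\Sigma^R$ with a single rule-symbol occurrence $\mu(t_1,..,t_n)$ at position $p$; source/target replace it by $l[t_1,..,t_n]$ / $r[t_1,..,t_n]$; $mind=|p|$; one-steps are convergent. Stepwise proof terms: one-steps; $\psi_1\cdot\psi_2$ with $tgt(\psi_1)=src(\psi_2)$ ($src=src(\psi_1)$, $tgt=tgt(\psi_2)$, convergent iff $\psi_2$ is, $mind=\min$); $\prod_{i<\omega}\psi_i=\psi_0\cdot(\psi_1\cdot\cdots)$ with all $\psi_i$ convergent and $tgt(\psi_i)=src(\psi_{i+1})$ ($src=src(\psi_0)$, $tgt=\lim_i tgt(\psi_i)$ if it exists, $mind=\min_i mind(\psi_i)$, convergent iff for each $k$, $mind(\psi_j)>k$ for all sufficiently large $j$). Stepwise-or-normal: stepwise, or a rule-free term $t\in\mathrm{Ter}^\infty(\Sigma)$ (then $src=tgt=t$, $mind=\omega$, convergent). Number of steps $|\psi|$ and components $\psi[\alpha]$ ($\alpha<|\psi|$): $|t|=0$; for a one-step $|\psi|=1$, $\psi[0]=\psi$; $|\psi_1\cdot\psi_2|=|\psi_1|+|\psi_2|$, component $\psi_1[\alpha]$ if $\alpha<|\psi_1|$ else $\psi_2[\beta]$ with $|\psi_1|+\beta=\alpha$; $|\prod\psi_i|=\sup_n(|\psi_0|+\dots+|\psi_n|)$, component $\psi_k[\gamma]$ for the unique $k,\gamma$ with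 $\alpha=|\psi_0|+\dots+|\psi_{k-1}|+\gamma$, $\gamma<|\psi_k|$. Denotation. A one-step $\psi$ denotes a step $a=\langle t,p,\mu,\sigma\rangle$ iff $src(\psi)=t$, $tgt(\psi)=tgt(a)$ and $\psi$ has symbol $\mu$ at $p$. $\psi$ denotes $\mathcal{A}$ iff $|\psi|$ equals the length of $\mathcal{A}$, $src(\psi)=src(\mathcal{A})$, and $\psi[\alpha]$ denotes the $\alpha$-th step of $\mathcal{A}$ for all $\alpha$ below the length. *)

theory Defs
  imports Complex_Main "HOL-Library.Extended_Nat"
begin

text \<open>One symbol type serves both ordinary terms (symbols Fs, Vs) and proof terms
(symbols Fs, Rs for rule symbols, and Comp for the binary composition symbol).\<close>

datatype ('f,'v,'r) sym = Fs 'f | Vs 'v | Rs 'r | Comp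

text \<open>A (finite or infinite) term is a partial map from positions (lists of
argument indices, 0-based) to symbols.\<close>
type_synonym ('f,'v,'r) tm = "nat list \<Rightarrow> ('f,'v,'r) sym option"

record ('f,'v,'r) trs =
  sig :: "'f set"
  arity :: "'f \<Rightarrow> nat"
  rules :: "'r set"
  lhs :: "'r \<Rightarrow> ('f,'v,'r) tm"
  rhs :: "'r \<Rightarrow> ('f,'v,'r) tm"
  rvars :: "'r \<Rightarrow> 'v list"   \<comment> \<open>fixed enumeration of the variables of lhs; gives the
                                   arity and argument order of the rule symbol in \<Sigma>^R\<close>

fun sym_ar :: "('f,'v,'r) trs \<Rightarrow> ('f,'v,'r) sym \<Rightarrow> nat" where
  "sym_ar T (Fs f) = arity T f"
| "sym_ar T (Vs x) = 0"
| "sym_ar T (Rs \<mu>) = length (rvars T \<mu>)"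
| "sym_ar T Comp = 2"

definition wf_tm :: "('f,'v,'r) trs \<Rightarrow> ('f,'v,'r) tm \<Rightarrow> bool" where
  "wf_tm T t \<longleftrightarrow> t [] \<noteq> None \<and>
     (\<forall>p i. t (p @ [i]) \<noteq> None \<longleftrightarrow> (\<exists>s. t p = Some s \<and> i < sym_ar T s))"

definition is_term :: "('f,'v,'r) trs \<Rightarrow> ('f,'v,'r) tm \<Rightarrow> bool" where
  "is_term T t \<longleftrightarrow> wf_tm T t \<and>
     (\<forall>p s. t p = Some s \<longrightarrow> (\<exists>f\<in>sig T. s = Fs f) \<or> (\<exists>x. s = Vs x))"

definition is_rterm :: "('f,'v,'r) trs \<Rightarrow> ('f,'v,'r) tm \<Rightarrow> bool" where
  "is_rterm T t \<longleftrightarrow> wf_tm T t \<and>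
     (\<forall>p s. t p = Some s \<longrightarrow> (\<exists>f\<in>sig T. s = Fs f) \<or> (\<exists>\<mu>\<in>rules T. s = Rs \<mu>))"

definition vars :: "('f,'v,'r) tm \<Rightarrow> 'v set" where
  "vars t = {x. \<exists>p. t p = Some (Vs x)}"

definition linear :: "('f,'v,'r) tm \<Rightarrow> bool" where
  "linear t \<longleftrightarrow> (\<forall>p q x. t p = Some (Vs x) \<and> t q = Some (Vs x) \<longrightarrow> p = q)"

definition finite_tm :: "('f,'v,'r) tm \<Rightarrow> bool" where
  "finite_tm t \<longleftrightarrow> finite {p. t p \<noteq> None}"

definition subt :: "('f,'v,'r) tm \<Rightarrow> nat list \<Rightarrow> ('f,'v,'r) tm" where
  "subt t p = (\<lambda>q. t (p @ q))"

definition repl :: "('f,'v,'r) tm \<Rightarrow> nat list \<Rightarrow> ('f,'v,'r) tm \<Rightarrow> ('f,'v,'r) tm" where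
  "repl t p s = (\<lambda>q. if take (length p) q = p then s (drop (length p) q) else t q)"

definition varat :: "('f,'v,'r) tm \<Rightarrow> nat list \<Rightarrow> 'v option" where
  "varat t q = (case t q of Some (Vs x) \<Rightarrow> Some x | _ \<Rightarrow> None)"

definition subst :: "('v \<Rightarrow> ('f,'v,'r) tm) \<Rightarrow> ('f,'v,'r) tm \<Rightarrow> ('f,'v,'r) tm" where
  "subst \<sigma> t = (\<lambda>q. case find (\<lambda>k. varat t (take k q) \<noteq> None) [0..<Suc (length q)] of
       None \<Rightarrow> t q
     | Some k \<Rightarrow> \<sigma> (the (varat t (take k q))) (drop k q))"

definition dist_tm :: "('f,'v,'r) tm \<Rightarrow> ('f,'v,'r) tm \<Rightarrow> real" where
  "dist_tm t u = (if t = u then 0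
     else (1/2) ^ (LEAST k. \<exists>q. length q = k \<and> t q \<noteq> u q))"

definition trs_ok :: "('f,'v,'r) trs \<Rightarrow> bool" where
  "trs_ok T \<longleftrightarrow> finite (sig T) \<and>
    (\<forall>\<mu>\<in>rules T. is_term T (lhs T \<mu>) \<and> finite_tm (lhs T \<mu>) \<and>
        (\<forall>x. lhs T \<mu> [] \<noteq> Some (Vs x)) \<and> linear (lhs T \<mu>) \<and>
        is_term T (rhs T \<mu>) \<and> vars (rhs T \<mu>) \<subseteq> vars (lhs T \<mu>) \<and>
        distinct (rvars T \<mu>) \<and> set (rvars T \<mu>) = vars (lhs T \<mu>))"

type_synonym ('f,'v,'r) step = "('f,'v,'r) tm \<times> nat list \<times> 'r \<times> ('v \<Rightarrow> ('f,'v,'r) tm)"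

fun st_src :: "('f,'v,'r) step \<Rightarrow> ('f,'v,'r) tm" where
  "st_src (t, p, \<mu>, \<sigma>) = t"

fun st_depth :: "('f,'v,'r) step \<Rightarrow> nat" where
  "st_depth (t, p, \<mu>, \<sigma>) = length p"

fun st_tgt :: "('f,'v,'r) trs \<Rightarrow> ('f,'v,'r) step \<Rightarrow> ('f,'v,'r) tm" where
  "st_tgt T (t, p, \<mu>, \<sigma>) = repl t p (subst \<sigma> (rhs T \<mu>))"

fun red_step :: "('f,'v,'r) trs \<Rightarrow> ('f,'v,'r) step \<Rightarrow> bool" where
  "red_step T (t, p, \<mu>, \<sigma>) \<longleftrightarrow> \<mu> \<in> rules T \<and> is_term T t \<and> t p \<noteq> None \<and>
      subt t p = subst \<sigma> (lhs T \<mu>)"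

text \<open>A reduction sequence of ordinal length \<beta> is represented as a triple
(t0, W, a): W is a well-order (its order type is \<beta>), a i is the step with index i,
and t0 is the source (needed for the empty sequence id_t0).\<close>
type_synonym ('f,'v,'r,'i) rseq = "('f,'v,'r) tm \<times> 'i rel \<times> ('i \<Rightarrow> ('f,'v,'r) step)"

definition lt :: "'i rel \<Rightarrow> 'i \<Rightarrow> 'i \<Rightarrow> bool" where
  "lt W i j \<longleftrightarrow> (i, j) \<in> W \<and> i \<noteq> j"

definition is_succ :: "'i rel \<Rightarrow> 'i \<Rightarrow> 'i \<Rightarrow> bool" where
  "is_succ W i j \<longleftrightarrow> lt W i j \<and> \<not> (\<exists>k. lt W i k \<and> lt W k j)"

definition is_limit :: "'i rel \<Rightarrow> 'i \<Rightarrow> bool" where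
  "is_limit W j \<longleftrightarrow> j \<in> Field W \<and> (\<exists>i. lt W i j) \<and> \<not> (\<exists>i. is_succ W i j)"

definition lim_below :: "'i rel \<Rightarrow> ('i \<Rightarrow> ('f,'v,'r) tm) \<Rightarrow> 'i \<Rightarrow> ('f,'v,'r) tm \<Rightarrow> bool" where
  "lim_below W f j L \<longleftrightarrow> (\<forall>\<epsilon>>0. \<exists>i'. lt W i' j \<and>
       (\<forall>i. lt W i' i \<and> lt W i j \<longrightarrow> dist_tm (f i) L < \<epsilon>))"

definition depth_below :: "'i rel \<Rightarrow> ('i \<Rightarrow> nat) \<Rightarrow> 'i \<Rightarrow> bool" where
  "depth_below W dp j \<longleftrightarrow> (\<forall>n. \<exists>i'. lt W i' j \<and> (\<forall>i. lt W i' i \<and> lt W i j \<longrightarrow> n < dp i))"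

definition lim_end :: "'i rel \<Rightarrow> ('i \<Rightarrow> ('f,'v,'r) tm) \<Rightarrow> ('f,'v,'r) tm \<Rightarrow> bool" where
  "lim_end W f L \<longleftrightarrow> (\<forall>\<epsilon>>0. \<exists>i'\<in>Field W. \<forall>i. lt W i' i \<longrightarrow> dist_tm (f i) L < \<epsilon>)"

definition depth_end :: "'i rel \<Rightarrow> ('i \<Rightarrow> nat) \<Rightarrow> bool" where
  "depth_end W dp \<longleftrightarrow> (\<forall>n. \<exists>i'\<in>Field W. \<forall>i. lt W i' i \<longrightarrow> n < dp i)"

definition has_max :: "'i rel \<Rightarrow> bool" where
  "has_max W \<longleftrightarrow> (\<exists>m\<in>Field W. \<forall>i\<in>Field W. (i, m) \<in> W)"

fun red_seq :: "('f,'v,'r) trs \<Rightarrow> ('f,'v,'r,'i) rseq \<Rightarrow> bool" where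
  "red_seq T (t0, W, a) \<longleftrightarrow>
     Well_order W \<and> is_term T t0 \<and>
     (\<forall>i\<in>Field W. red_step T (a i)) \<and>
     (\<forall>i\<in>Field W. (\<forall>j\<in>Field W. (i, j) \<in> W) \<longrightarrow> st_src (a i) = t0) \<and>
     (\<forall>i j. is_succ W i j \<longrightarrow> st_src (a j) = st_tgt T (a i)) \<and>
     (\<forall>j. is_limit W j \<longrightarrow>
        lim_below W (\<lambda>i. st_tgt T (a i)) j (st_src (a j)) \<and>
        depth_below W (\<lambda>i. st_depth (a i)) j)"

fun seq_conv :: "('f,'v,'r) trs \<Rightarrow> ('f,'v,'r,'i) rseq \<Rightarrow> bool" where
  "seq_conv T (t0, W, a) \<longleftrightarrow>
     Field W = {} \<or> has_max W \<or>
     ((\<exists>L. is_term T L \<and> lim_end W (\<lambda>i. st_tgt T (a i)) L) \<and>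
      depth_end W (\<lambda>i. st_depth (a i)))"

fun seq_tgt :: "('f,'v,'r) trs \<Rightarrow> ('f,'v,'r,'i) rseq \<Rightarrow> ('f,'v,'r) tm" where
  "seq_tgt T (t0, W, a) =
     (if Field W = {} then t0
      else if has_max W then st_tgt T (a (THE m. m \<in> Field W \<and> (\<forall>i\<in>Field W. (i, m) \<in> W)))
      else (THE L. is_term T L \<and> lim_end W (\<lambda>i. st_tgt T (a i)) L))"

fun seq_mind :: "('f,'v,'r,'i) rseq \<Rightarrow> enat" where
  "seq_mind (t0, W, a) =
     (if Field W = {} then \<infinity> else (INF i\<in>Field W. enat (st_depth (a i))))"

definition one_step :: "('f,'v,'r) trs \<Rightarrow> ('f,'v,'r) tm \<Rightarrow> bool" where
  "one_step T \<psi> \<longleftrightarrow> is_rterm T \<psi> \<and> (\<exists>!p. \<exists>\<mu>. \<psi> p = Some (Rs \<mu>))"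

definition rpos :: "('f,'v,'r) tm \<Rightarrow> nat list" where
  "rpos \<psi> = (THE p. \<exists>\<mu>. \<psi> p = Some (Rs \<mu>))"

definition rsym :: "('f,'v,'r) tm \<Rightarrow> 'r" where
  "rsym \<psi> = (THE \<mu>. \<psi> (rpos \<psi>) = Some (Rs \<mu>))"

text \<open>The substitution l[t1,..,tn]: the i-th variable of the rule (in the fixed
enumeration rvars) is replaced by the i-th argument of the rule symbol.\<close>
definition arg_subst :: "('f,'v,'r) trs \<Rightarrow> ('f,'v,'r) tm \<Rightarrow> 'v \<Rightarrow> ('f,'v,'r) tm" where
  "arg_subst T \<psi> x =
     (if x \<in> set (rvars T (rsym \<psi>))
      then subt \<psi> (rpos \<psi> @ [LEAST i. rvars T (rsym \<psi>) ! i = x])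
      else (\<lambda>q. if q = [] then Some (Vs x) else None))"

definition src1 :: "('f,'v,'r) trs \<Rightarrow> ('f,'v,'r) tm \<Rightarrow> ('f,'v,'r) tm" where
  "src1 T \<psi> = repl \<psi> (rpos \<psi>) (subst (arg_subst T \<psi>) (lhs T (rsym \<psi>)))"

definition tgt1 :: "('f,'v,'r) trs \<Rightarrow> ('f,'v,'r) tm \<Rightarrow> ('f,'v,'r) tm" where
  "tgt1 T \<psi> = repl \<psi> (rpos \<psi>) (subst (arg_subst T \<psi>) (rhs T (rsym \<psi>)))"

text \<open>Composition \<psi>1 \<cdot> \<psi>2 and the infinite product \<psi>0 \<cdot> (\<psi>1 \<cdot> (\<psi>2 \<cdot> ...)) as terms.\<close>
definition comp :: "('f,'v,'r) tm \<Rightarrow> ('f,'v,'r) tm \<Rightarrow> ('f,'v,'r) tm" where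
  "comp \<psi>1 \<psi>2 = (\<lambda>q. case q of [] \<Rightarrow> Some Comp
      | i # q' \<Rightarrow> if i = 0 then \<psi>1 q' else if i = 1 then \<psi>2 q' else None)"

definition prod :: "(nat \<Rightarrow> ('f,'v,'r) tm) \<Rightarrow> ('f,'v,'r) tm" where
  "prod \<psi>s = (\<lambda>q. let k = length (takeWhile (\<lambda>i. i = 1) q) in
      case drop k q of [] \<Rightarrow> Some Comp
      | i # q' \<Rightarrow> if i = 0 then \<psi>s k q' else None)"

definition seq_lim :: "('f,'v,'r) trs \<Rightarrow> (nat \<Rightarrow> ('f,'v,'r) tm) \<Rightarrow> ('f,'v,'r) tm option" where
  "seq_lim T s = (if \<exists>L. is_term T L \<and> (\<forall>\<epsilon>>0. \<exists>N. \<forall>i\<ge>N. dist_tm (s i) L < \<epsilon>)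
     then Some (THE L. is_term T L \<and> (\<forall>\<epsilon>>0. \<exists>N. \<forall>i\<ge>N. dist_tm (s i) L < \<epsilon>))
     else None)"

text \<open>stepwise T \<psi> s t m c S: \<psi> is a stepwise proof term with src s, tgt t
(None if the target limit does not exist), mind m, convergence flag c, and the set S of
positions of its components (one-steps), which ordered lexicographically gives the
sequence \<psi>[\<alpha>], \<alpha> < |\<psi>|.\<close>
inductive stepwise :: "('f,'v,'r) trs \<Rightarrow> ('f,'v,'r) tm \<Rightarrow> ('f,'v,'r) tm \<Rightarrow>
    ('f,'v,'r) tm option \<Rightarrow> enat \<Rightarrow> bool \<Rightarrow> nat list set \<Rightarrow> bool" for T where
  one: "one_step T \<psi> \<Longrightarrow>
     stepwise T \<psi> (src1 T \<psi>) (Some (tgt1 T \<psi>)) (enat (length (rpos \<psi>))) True {[]}"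
| cmp: "stepwise T \<psi>1 s1 (Some t1) m1 c1 S1 \<Longrightarrow> stepwise T \<psi>2 t1 t2 m2 c2 S2 \<Longrightarrow>
     stepwise T (comp \<psi>1 \<psi>2) s1 t2 (min m1 m2) c2 ((\<lambda>p. 0 # p) ` S1 \<union> (\<lambda>p. 1 # p) ` S2)"
| prd: "(\<And>i. stepwise T (\<psi>s i) (s i) (Some (s (Suc i))) (m i) True (S i)) \<Longrightarrow>
     stepwise T (prod \<psi>s) (s 0) (seq_lim T s) (INF i. m i)
       (\<forall>k::nat. \<exists>N. \<forall>j\<ge>N. enat k < m j)
       (\<Union>k. (\<lambda>p. replicate k 1 @ 0 # p) ` S k)"

definition stepwise_or_normal :: "('f,'v,'r) trs \<Rightarrow> ('f,'v,'r) tm \<Rightarrow> ('f,'v,'r) tm \<Rightarrow>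
    ('f,'v,'r) tm option \<Rightarrow> enat \<Rightarrow> bool \<Rightarrow> nat list set \<Rightarrow> bool" where
  "stepwise_or_normal T \<psi> s t m c S \<longleftrightarrow> stepwise T \<psi> s t m c S \<or>
     (is_term T \<psi> \<and> s = \<psi> \<and> t = Some \<psi> \<and> m = \<infinity> \<and> c \<and> S = {})"

fun denotes_step :: "('f,'v,'r) trs \<Rightarrow> ('f,'v,'r) tm \<Rightarrow> ('f,'v,'r) step \<Rightarrow> bool" where
  "denotes_step T \<psi> (t, p, \<mu>, \<sigma>) \<longleftrightarrow>
     src1 T \<psi> = t \<and> tgt1 T \<psi> = st_tgt T (t, p, \<mu>, \<sigma>) \<and> \<psi> p = Some (Rs \<mu>)"

definition lexrel :: "nat list set \<Rightarrow> nat list rel" where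
  "lexrel S = {(p, q). p \<in> S \<and> q \<in> S \<and> (p = q \<or> (p, q) \<in> lexord {(a, b). a < b})}"

definition order_iso :: "'a rel \<Rightarrow> 'b rel \<Rightarrow> ('a \<Rightarrow> 'b) \<Rightarrow> bool" where
  "order_iso r r' f \<longleftrightarrow> bij_betw f (Field r) (Field r') \<and>
     (\<forall>x\<in>Field r. \<forall>y\<in>Field r. (x, y) \<in> r \<longleftrightarrow> (f x, f y) \<in> r')"

text \<open>\<psi> (with source s and component positions S) denotes A = (t0, W, a):
|\<psi>| = length of A (order isomorphism of the index orders), src equal, and the
\<alpha>-th component denotes the \<alpha>-th step.\<close>
fun denotes :: "('f,'v,'r) trs \<Rightarrow> ('f,'v,'r) tm \<Rightarrow> ('f,'v,'r) tm \<Rightarrow> nat list set \<Rightarrow>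
    ('f,'v,'r,'i) rseq \<Rightarrow> bool" where
  "denotes T \<psi> s S (t0, W, a) \<longleftrightarrow> s = t0 \<and>
     (\<exists>f. order_iso (lexrel S) W f \<and> (\<forall>p\<in>S. denotes_step T (subt \<psi> p) (a (f p))))"

end

theory Submission
  imports Defs
begin


lemma wo_refl: "Well_order W \<Longrightarrow> i \<in> Field W \<Longrightarrow> (i,i) \<in> W"
  by (auto simp: order_on_defs refl_on_def)
lemma wo_total: "Well_order W \<Longrightarrow> i \<in> Field W \<Longrightarrow> j \<in> Field W \<Longrightarrow> (i,j) \<in> W \<or> (j,i) \<in> W"
  by (simp add: order_on_defs total_on_def refl_on_def) metis
lemma wo_antisym: "Well_order W \<Longrightarrow> (i,j) \<in> W \<Longrightarrow> (j,i) \<in> W \<Longrightarrow> i = j"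
  by (auto simp: order_on_defs antisym_def)
lemma wo_trans: "Well_order W \<Longrightarrow> (i,j) \<in> W \<Longrightarrow> (j,k) \<in> W \<Longrightarrow> (i,k) \<in> W"
  by (auto simp: order_on_defs trans_def)
lemma wo_wf: "Well_order W \<Longrightarrow> wf (W - Id)"
  by (auto simp: order_on_defs)

lemma lt_field: "lt W i j \<Longrightarrow> i \<in> Field W \<and> j \<in> Field W"
  by (auto simp: lt_def intro: FieldI1 FieldI2)
lemma lt_trans: "Well_order W \<Longrightarrow> lt W i j \<Longrightarrow> lt W j k \<Longrightarrow> lt W i k"
  unfolding lt_def using wo_trans wo_antisym by metis
lemma lt_le_trans: "Well_order W \<Longrightarrow> lt W i j \<Longrightarrow> (j,k) \<in> W \<Longrightarrow> lt W i k"
  unfolding lt_def using wo_trans wo_antisym by metis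
lemma le_lt_trans: "Well_order W \<Longrightarrow> (i,j) \<in> W \<Longrightarrow> lt W j k \<Longrightarrow> lt W i k"
  unfolding lt_def using wo_trans wo_antisym by metis
lemma lt_asym: "Well_order W \<Longrightarrow> lt W i j \<Longrightarrow> (j,i) \<notin> W"
  unfolding lt_def using wo_antisym by metis
lemma not_le_lt: "Well_order W \<Longrightarrow> i \<in> Field W \<Longrightarrow> j \<in> Field W \<Longrightarrow> (i,j) \<notin> W \<Longrightarrow> lt W j i"
  unfolding lt_def using wo_total wo_refl by metis

lemma wo_min: assumes "Well_order W" "D \<subseteq> Field W" "D \<noteq> {}"
  shows "\<exists>j0\<in>D. \<forall>j\<in>D. (j0,j) \<in> W"
proof -
  obtain x where "x \<in> D" using assms by auto
  from wfE_min[OF wo_wf[OF assms(1)] this] obtain j0 where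
    j0: "j0 \<in> D" "\<And>y. (y, j0) \<in> W - Id \<Longrightarrow> y \<notin> D" by metis
  show ?thesis
  proof (intro bexI[OF _ j0(1)] ballI)
    fix j assume "j \<in> D"
    then show "(j0,j) \<in> W" using j0 assms wo_total[OF assms(1), of j0 j] by blast
  qed
qed

lemma wo_Restr_Field: "Well_order W \<Longrightarrow> D \<subseteq> Field W \<Longrightarrow> Field (Restr W D) = D"
  by (rule Refl_Field_Restr2) (auto simp: order_on_defs)

definition agree :: "nat \<Rightarrow> ('f,'v,'r) tm \<Rightarrow> ('f,'v,'r) tm \<Rightarrow> bool" where
  "agree k x y \<longleftrightarrow> (\<forall>q. length q \<le> k \<longrightarrow> x q = y q)"

lemma agree_sym: "agree k x y \<Longrightarrow> agree k y x" by (auto simp: agree_def)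
lemma agree_trans: "agree k x y \<Longrightarrow> agree k y z \<Longrightarrow> agree k x z" by (auto simp: agree_def)
lemma agree_refl: "agree k x x" by (auto simp: agree_def)
lemma agree_mono: "agree k x y \<Longrightarrow> n \<le> k \<Longrightarrow> agree n x y" by (auto simp: agree_def)

lemma dist_agree: "dist_tm x y < (1/2)^k \<longleftrightarrow> agree k x y"
proof (cases "x = y")
  case True then show ?thesis by (simp add: dist_tm_def agree_def)
next
  case False
  then obtain q0 where q0: "x q0 \<noteq> y q0" by auto
  define n where "n = (LEAST k. \<exists>q. length q = k \<and> x q \<noteq> y q)"
  have ex: "\<exists>q. length q = n \<and> x q \<noteq> y q" unfolding n_def
    by (rule LeastI[of _ "length q0"]) (use q0 in auto)
  have least: "\<And>q. x q \<noteq> y q \<Longrightarrow> n \<le> length q" unfolding n_def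
    by (rule Least_le) auto
  have d: "dist_tm x y = (1/2)^n" using False by (simp add: dist_tm_def n_def)
  have "(1/2::real)^n < (1/2)^k \<longleftrightarrow> k < n" by (simp add: power_strict_decreasing_iff)
  moreover have "agree k x y \<longleftrightarrow> k < n"
    using ex least unfolding agree_def by (metis le_trans not_le)
  ultimately show ?thesis using d by simp
qed

lemma eps_agree:
  "(\<forall>\<epsilon>>0. \<exists>i'. Q i' \<and> (\<forall>i. R i' i \<longrightarrow> dist_tm (f i) L < \<epsilon>)) \<longleftrightarrow>
   (\<forall>k. \<exists>i'. Q i' \<and> (\<forall>i. R i' i \<longrightarrow> agree k (f i) L))"
proof
  assume H: "\<forall>\<epsilon>>0. \<exists>i'. Q i' \<and> (\<forall>i. R i' i \<longrightarrow> dist_tm (f i) L < \<epsilon>)"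
  show "\<forall>k. \<exists>i'. Q i' \<and> (\<forall>i. R i' i \<longrightarrow> agree k (f i) L)"
  proof
    fix k :: nat
    have "(0::real) < (1/2)^k" by simp
    then show "\<exists>i'. Q i' \<and> (\<forall>i. R i' i \<longrightarrow> agree k (f i) L)"
      using H dist_agree by metis
  qed
next
  assume H: "\<forall>k. \<exists>i'. Q i' \<and> (\<forall>i. R i' i \<longrightarrow> agree k (f i) L)"
  show "\<forall>\<epsilon>>0. \<exists>i'. Q i' \<and> (\<forall>i. R i' i \<longrightarrow> dist_tm (f i) L < \<epsilon>)"
  proof (intro allI impI)
    fix \<epsilon> :: real assume "\<epsilon> > 0"
    then obtain k where k: "(1/2::real)^k < \<epsilon>" using real_arch_pow_inv[of \<epsilon> "1/2"] by auto
    obtain i' where "Q i'" "\<forall>i. R i' i \<longrightarrow> agree k (f i) L" using H by blast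
    then show "\<exists>i'. Q i' \<and> (\<forall>i. R i' i \<longrightarrow> dist_tm (f i) L < \<epsilon>)"
      using k dist_agree by (metis order.strict_trans)
  qed
qed

lemma lim_end_agree: "lim_end W f L \<longleftrightarrow> (\<forall>k. \<exists>i'\<in>Field W. \<forall>i. lt W i' i \<longrightarrow> agree k (f i) L)"
  using eps_agree[of "\<lambda>i'. i' \<in> Field W" "lt W" f L] unfolding lim_end_def by blast
lemma lim_below_agree: "lim_below W f j L \<longleftrightarrow> (\<forall>k. \<exists>i'. lt W i' j \<and> (\<forall>i. lt W i' i \<and> lt W i j \<longrightarrow> agree k (f i) L))"
  using eps_agree[of "\<lambda>i'. lt W i' j" "\<lambda>i' i. lt W i' i \<and> lt W i j" f L] unfolding lim_below_def by blast
lemma seq_lim_cond_agree: "(\<forall>\<epsilon>>0. \<exists>N. \<forall>i\<ge>N. dist_tm (s i) L < \<epsilon>) \<longleftrightarrow> (\<forall>k. \<exists>N. \<forall>i\<ge>N. agree k (s i) L)"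
  using eps_agree[of "\<lambda>_. True" "\<lambda>N i. N \<le> i" s L] by simp

lemma tgt_agree: "k < st_depth a \<Longrightarrow> agree k (st_tgt T a) (st_src a)"
  by (cases a) (auto simp: agree_def repl_def min_def)



definition cvx :: "'i rel \<Rightarrow> 'i set \<Rightarrow> bool" where
  "cvx W D \<longleftrightarrow> D \<subseteq> Field W \<and> (\<forall>i j k. i \<in> D \<longrightarrow> k \<in> D \<longrightarrow> (i,j) \<in> W \<longrightarrow> (j,k) \<in> W \<longrightarrow> j \<in> D)"

lemma lt_Restr: "lt (Restr W D) i j \<longleftrightarrow> i \<in> D \<and> j \<in> D \<and> lt W i j"
  by (auto simp: lt_def)

lemma cvx_lt: "cvx W D \<Longrightarrow> i \<in> D \<Longrightarrow> k \<in> D \<Longrightarrow> lt W i j \<Longrightarrow> lt W j k \<Longrightarrow> j \<in> D"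
  unfolding cvx_def lt_def by blast

lemma succ_Restr: assumes "Well_order W" "cvx W D" "is_succ (Restr W D) i j" shows "is_succ W i j"
proof -
  have "lt W i j" using assms(3) unfolding is_succ_def lt_Restr by blast
  moreover have "\<not> (\<exists>k. lt W i k \<and> lt W k j)"
  proof
    assume "\<exists>k. lt W i k \<and> lt W k j"
    then obtain k where k: "lt W i k" "lt W k j" by blast
    have "i \<in> D" "j \<in> D" using assms(3) unfolding is_succ_def lt_Restr by auto
    then have "k \<in> D" using cvx_lt[OF assms(2)] k by blast
    then show False using assms(3) k \<open>i \<in> D\<close> \<open>j \<in> D\<close> unfolding is_succ_def lt_Restr by blast
  qed
  ultimately show ?thesis unfolding is_succ_def by blast
qed

lemma succ_Restr_rev: "is_succ W i j \<Longrightarrow> i \<in> D \<Longrightarrow> j \<in> D \<Longrightarrow> is_succ (Restr W D) i j"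
  unfolding is_succ_def lt_Restr by blast

lemma below_Restr:
  assumes wo: "Well_order W" and c: "cvx W D" and j: "j \<in> D" and i0: "i0 \<in> D" "lt W i0 j"
    and i': "lt W i' j"
  shows "\<exists>i''. lt (Restr W D) i'' j \<and> (\<forall>i. lt (Restr W D) i'' i \<longrightarrow> lt W i' i)"
proof (cases "(i', i0) \<in> W")
  case True
  have "\<forall>i. lt (Restr W D) i0 i \<longrightarrow> lt W i' i"
    using le_lt_trans[OF wo True] unfolding lt_Restr by blast
  then show ?thesis using i0 j unfolding lt_Restr by blast
next
  case False
  then have "lt W i0 i'" using not_le_lt[OF wo] lt_field i0 i' by metis
  then have "i' \<in> D" using cvx_lt[OF c i0(1) j _ i'] by blast
  then show ?thesis using i' j by (intro exI[of _ i']) (auto simp: lt_Restr)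
qed

lemma limit_Restr: assumes wo: "Well_order W" and c: "cvx W D" and l: "is_limit (Restr W D) j"
  shows "is_limit W j"
proof -
  have "j \<in> Field (Restr W D)" using l unfolding is_limit_def by blast
  then have jD: "j \<in> D" unfolding Field_def by blast
  obtain i0 where i0: "lt (Restr W D) i0 j" using l unfolding is_limit_def by blast
  have i0D: "i0 \<in> D" and i0j: "lt W i0 j" using i0 unfolding lt_Restr by auto
  have ns: "\<not> is_succ W i j" for i
  proof
    assume s: "is_succ W i j"
    then have ij: "lt W i j" by (simp add: is_succ_def)
    have "i \<in> D"
    proof (cases "(i0, i) \<in> W")
      case True
      moreover have "(i, j) \<in> W" using ij unfolding lt_def by blast
      ultimately show ?thesis using c i0D jD unfolding cvx_def by blast
    next
      case False
      have "i0 \<in> Field W" "i \<in> Field W" using lt_field[OF i0j] lt_field[OF ij] by auto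
      then have "lt W i i0" using not_le_lt[OF wo _ _ False] by blast
      then have False using s i0j unfolding is_succ_def by blast
      then show ?thesis ..
    qed
    then have "is_succ (Restr W D) i j" using succ_Restr_rev[OF s] jD by blast
    then show False using l unfolding is_limit_def by blast
  qed
  have "j \<in> Field W" using lt_field[OF i0j] by blast
  then show ?thesis using ns i0j unfolding is_limit_def by (intro conjI) auto
qed

lemma red_seq_Restr:
  assumes r: "red_seq T (t0, W, a)" and c: "cvx W D" and t': "is_term T t'"
    and src: "\<forall>i\<in>D. (\<forall>j\<in>D. (i,j) \<in> W) \<longrightarrow> st_src (a i) = t'"
  shows "red_seq T (t', Restr W D, a)"
proof -
  note rr = r[unfolded red_seq.simps]
  have wo: "Well_order W" using rr by blast
  have F: "Field (Restr W D) = D" using wo_Restr_Field[OF wo] c by (simp add: cvx_def)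
  have lim: "lim_below (Restr W D) (\<lambda>i. st_tgt T (a i)) j (st_src (a j)) \<and>
        depth_below (Restr W D) (\<lambda>i. st_depth (a i)) j" if l: "is_limit (Restr W D) j" for j
  proof -
    have lW: "is_limit W j" using limit_Restr[OF wo c l] .
    have jD: "j \<in> D" using l F unfolding is_limit_def by blast
    obtain i0 where i0: "i0 \<in> D" "lt W i0 j" using l unfolding is_limit_def lt_Restr by blast
    have L: "lim_below W (\<lambda>i. st_tgt T (a i)) j (st_src (a j))" and
      Dp: "depth_below W (\<lambda>i. st_depth (a i)) j" using rr lW by blast+
    show ?thesis
    proof
      show "lim_below (Restr W D) (\<lambda>i. st_tgt T (a i)) j (st_src (a j))"
        unfolding lim_below_agree
      proof
        fix k
        obtain i' where i': "lt W i' j" "\<forall>i. lt W i' i \<and> lt W i j \<longrightarrow> agree k (st_tgt T (a i)) (st_src (a j))"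
          using L unfolding lim_below_agree by blast
        obtain i'' where "lt (Restr W D) i'' j" "\<forall>i. lt (Restr W D) i'' i \<longrightarrow> lt W i' i"
          using below_Restr[OF wo c jD i0 i'(1)] by blast
        then show "\<exists>i'. lt (Restr W D) i' j \<and> (\<forall>i. lt (Restr W D) i' i \<and> lt (Restr W D) i j \<longrightarrow> agree k (st_tgt T (a i)) (st_src (a j)))"
          using i'(2) unfolding lt_Restr by blast
      qed
      show "depth_below (Restr W D) (\<lambda>i. st_depth (a i)) j"
        unfolding depth_below_def
      proof
        fix k
        obtain i' where i': "lt W i' j" "\<forall>i. lt W i' i \<and> lt W i j \<longrightarrow> k < st_depth (a i)"
          using Dp unfolding depth_below_def by blast
        obtain i'' where "lt (Restr W D) i'' j" "\<forall>i. lt (Restr W D) i'' i \<longrightarrow> lt W i' i"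
          using below_Restr[OF wo c jD i0 i'(1)] by blast
        then show "\<exists>i'. lt (Restr W D) i' j \<and> (\<forall>i. lt (Restr W D) i' i \<and> lt (Restr W D) i j \<longrightarrow> k < st_depth (a i))"
          using i'(2) unfolding lt_Restr by blast
      qed
    qed
  qed
  have r': "Well_order W" "is_term T t0" "\<forall>i\<in>Field W. red_step T (a i)"
    "\<forall>i j. is_succ W i j \<longrightarrow> st_src (a j) = st_tgt T (a i)" using rr by blast+
  show ?thesis
    unfolding red_seq.simps
  proof (intro conjI)
    show "Well_order (Restr W D)" using Well_order_Restr[OF wo] .
    show "is_term T t'" by fact
    show "\<forall>i\<in>Field (Restr W D). red_step T (a i)" using r'(3) c F unfolding cvx_def by blast
    show "\<forall>i\<in>Field (Restr W D). (\<forall>j\<in>Field (Restr W D). (i, j) \<in> Restr W D) \<longrightarrow> st_src (a i) = t'"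
      using src F by blast
    show "\<forall>i j. is_succ (Restr W D) i j \<longrightarrow> st_src (a j) = st_tgt T (a i)"
      using r'(4) succ_Restr[OF wo c] by blast
    show "\<forall>j. is_limit (Restr W D) j \<longrightarrow> lim_below (Restr W D) (\<lambda>i. st_tgt T (a i)) j (st_src (a j)) \<and>
        depth_below (Restr W D) (\<lambda>i. st_depth (a i)) j" using lim by blast
  qed
qed

lemma lim_end_unique:
  assumes wo: "Well_order W" and ne: "Field W \<noteq> {}" and nm: "\<not> has_max W"
    and l1: "lim_end W f L1" and l2: "lim_end W f L2"
  shows "L1 = L2"
proof (rule ccontr)
  assume "L1 \<noteq> L2"
  then obtain q where q: "L1 q \<noteq> L2 q" by auto
  obtain i1 where i1: "i1 \<in> Field W" "\<forall>i. lt W i1 i \<longrightarrow> agree (length q) (f i) L1"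
    using l1 unfolding lim_end_agree by blast
  obtain i2 where i2: "i2 \<in> Field W" "\<forall>i. lt W i2 i \<longrightarrow> agree (length q) (f i) L2"
    using l2 unfolding lim_end_agree by blast
  define i3 where "i3 = (if (i1,i2) \<in> W then i2 else i1)"
  have i3: "i3 \<in> Field W" "(i1,i3) \<in> W" "(i2,i3) \<in> W"
    using i1 i2 wo_total[OF wo i1(1) i2(1)] wo_refl[OF wo] unfolding i3_def by auto
  obtain i where "i \<in> Field W" "(i, i3) \<notin> W" using nm i3(1) unfolding has_max_def by blast
  then have "lt W i3 i" using not_le_lt[OF wo] i3 by blast
  then have "lt W i1 i" "lt W i2 i" using le_lt_trans[OF wo] i3 by blast+
  then have a1: "agree (length q) (f i) L1" and a2: "agree (length q) (f i) L2" using i1 i2 by blast+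
  have "agree (length q) L1 L2" using agree_trans[OF agree_sym[OF a1] a2] .
  then show False using q unfolding agree_def by blast
qed

lemma seq_lim_unique:
  fixes s :: "nat \<Rightarrow> ('f,'v,'r) tm"
  assumes "\<forall>k. \<exists>N. \<forall>i\<ge>N. agree k (s i) L1" "\<forall>k. \<exists>N. \<forall>i\<ge>N. agree k (s i) L2"
  shows "L1 = L2"
proof (rule ccontr)
  assume "L1 \<noteq> L2"
  then obtain q where q: "L1 q \<noteq> L2 q" by auto
  obtain N1 where n1: "\<forall>i\<ge>N1. agree (length q) (s i) L1" using assms(1) by blast
  obtain N2 where n2: "\<forall>i\<ge>N2. agree (length q) (s i) L2" using assms(2) by blast
  have a1: "agree (length q) (s (max N1 N2)) L1" using n1 by simp
  have a2: "agree (length q) (s (max N1 N2)) L2" using n2 by simp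
  have "agree (length q) L1 L2" using agree_trans[OF agree_sym[OF a1] a2] .
  then show False using q unfolding agree_def by blast
qed


lemma red_step_term: "red_step T x \<Longrightarrow> is_term T (st_src x)"
  by (cases x) auto

lemma nomax_above: assumes wo: "Well_order W" and nm: "\<not> has_max W" and i': "i' \<in> Field W"
  shows "\<exists>i. lt W i' i"
proof -
  obtain i where "i \<in> Field W" "(i, i') \<notin> W" using nm i' unfolding has_max_def by blast
  then show ?thesis using not_le_lt[OF wo _ i'] by blast
qed

lemma max_the: assumes wo: "Well_order W" and m: "m \<in> Field W" "\<forall>i\<in>Field W. (i, m) \<in> W"
  shows "(THE m. m \<in> Field W \<and> (\<forall>i\<in>Field W. (i, m) \<in> W)) = m"
proof (rule the_equality)
  show "m \<in> Field W \<and> (\<forall>i\<in>Field W. (i, m) \<in> W)" using m by blast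
  fix m' assume "m' \<in> Field W \<and> (\<forall>i\<in>Field W. (i, m') \<in> W)"
  then show "m' = m" using m wo_antisym[OF wo] by blast
qed

lemma seq_tgt_lim:
  assumes wo: "Well_order W" and ne: "Field W \<noteq> {}" and nm: "\<not> has_max W"
    and L: "is_term T L" "lim_end W (\<lambda>i. st_tgt T (a i)) L"
  shows "seq_tgt T (t0, W, a) = L"
proof -
  have "(THE L. is_term T L \<and> lim_end W (\<lambda>i. st_tgt T (a i)) L) = L"
  proof (rule the_equality)
    show "is_term T L \<and> lim_end W (\<lambda>i. st_tgt T (a i)) L" using L by blast
    fix L' assume "is_term T L' \<and> lim_end W (\<lambda>i. st_tgt T (a i)) L'"
    then show "L' = L" using lim_end_unique[OF wo ne nm _ L(2)] by blast
  qed
  then show ?thesis using ne nm by simp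
qed

lemma stable:
  assumes r: "red_seq T (t0, W, a)" and dp: "\<forall>i\<in>Field W. k < st_depth (a i)"
  shows "\<forall>i\<in>Field W. agree k (st_src (a i)) t0 \<and> agree k (st_tgt T (a i)) t0"
proof -
  note rr = r[unfolded red_seq.simps]
  have wo: "Well_order W" using rr by blast
  have src: "i \<in> Field W \<longrightarrow> agree k (st_src (a i)) t0" for i
  proof (induct i rule: wf_induct[OF wo_wf[OF wo]])
    case (1 i)
    show ?case
    proof
      assume iF: "i \<in> Field W"
      have tIH: "agree k (st_tgt T (a y)) t0" if y: "lt W y i" for y
      proof -
        have "(y, i) \<in> W - Id" "y \<in> Field W" using y lt_field[OF y] unfolding lt_def by auto
        then have "agree k (st_src (a y)) t0" using 1 by blast
        moreover have "agree k (st_tgt T (a y)) (st_src (a y))" using tgt_agree dp \<open>y \<in> Field W\<close> by blast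
        ultimately show ?thesis using agree_trans by blast
      qed
      show "agree k (st_src (a i)) t0"
      proof (cases "\<forall>j\<in>Field W. (i, j) \<in> W")
        case True
        then have "st_src (a i) = t0" using rr iF by blast
        then show ?thesis using agree_refl by simp
      next
        case False
        then obtain j where "j \<in> Field W" "(i, j) \<notin> W" by blast
        then have ji: "lt W j i" using not_le_lt[OF wo iF] by blast
        show ?thesis
        proof (cases "\<exists>y. is_succ W y i")
          case True
          then obtain y where y: "is_succ W y i" by blast
          then have "st_src (a i) = st_tgt T (a y)" using rr by blast
          moreover have "lt W y i" using y unfolding is_succ_def by blast
          ultimately show ?thesis using tIH by simp
        next
          case False
          then have lim: "is_limit W i" using iF ji unfolding is_limit_def by blast
          then have "lim_below W (\<lambda>i. st_tgt T (a i)) i (st_src (a i))" using rr by blast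
          then obtain i' where i': "lt W i' i" "\<forall>x. lt W i' x \<and> lt W x i \<longrightarrow> agree k (st_tgt T (a x)) (st_src (a i))"
            unfolding lim_below_agree by blast
          have "\<not> is_succ W i' i" using False by blast
          then obtain x where x: "lt W i' x" "lt W x i" using i'(1) unfolding is_succ_def by blast
          have "agree k (st_tgt T (a x)) (st_src (a i))" using i'(2) x by blast
          moreover have "agree k (st_tgt T (a x)) t0" using tIH x(2) .
          ultimately show ?thesis using agree_trans agree_sym by metis
        qed
      qed
    qed
  qed
  show ?thesis
  proof
    fix i assume iF: "i \<in> Field W"
    have "agree k (st_src (a i)) t0" using src iF by blast
    moreover have "agree k (st_tgt T (a i)) (st_src (a i))" using tgt_agree dp iF by blast
    ultimately show "agree k (st_src (a i)) t0 \<and> agree k (st_tgt T (a i)) t0"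
      using agree_trans by blast
  qed
qed

lemma stable_tgt:
  assumes r: "red_seq T (t0, W, a)" and dp: "\<forall>i\<in>Field W. k < st_depth (a i)"
    and cv: "seq_conv T (t0, W, a)"
  shows "agree k (seq_tgt T (t0, W, a)) t0"
proof -
  note rr = r[unfolded red_seq.simps]
  have wo: "Well_order W" using rr by blast
  note st = stable[OF r dp]
  show ?thesis
  proof (cases "Field W = {}")
    case True then show ?thesis using agree_refl by simp
  next
    case ne: False
    show ?thesis
    proof (cases "has_max W")
      case True
      then obtain m where m: "m \<in> Field W" "\<forall>i\<in>Field W. (i, m) \<in> W" unfolding has_max_def by blast
      have "seq_tgt T (t0, W, a) = st_tgt T (a m)" using ne True max_the[OF wo m] by simp
      then show ?thesis using st m by simp
    next
      case nm: False
      then obtain L where L: "is_term T L" "lim_end W (\<lambda>i. st_tgt T (a i)) L" using cv ne by auto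
      have eq: "seq_tgt T (t0, W, a) = L" using seq_tgt_lim[OF wo ne nm L] .
      obtain i' where i': "i' \<in> Field W" "\<forall>i. lt W i' i \<longrightarrow> agree k (st_tgt T (a i)) L"
        using L(2) unfolding lim_end_agree by blast
      obtain i where i: "lt W i' i" using nomax_above[OF wo nm i'(1)] by blast
      have a1: "agree k (st_tgt T (a i)) L" using i'(2) i by blast
      have a2: "agree k (st_tgt T (a i)) t0" using st lt_field[OF i] by blast
      show ?thesis unfolding eq using agree_trans[OF agree_sym[OF a1] a2] .
    qed
  qed
qed


lemma tail_equiv:
  assumes wo: "Well_order W" and U: "D1 \<union> D2 = Field W" and dis: "D1 \<inter> D2 = {}"
    and n2: "D2 \<noteq> {}" and ord: "\<forall>i\<in>D1. \<forall>j\<in>D2. (i,j) \<in> W"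
  shows "(\<exists>i'\<in>Field W. \<forall>i. lt W i' i \<longrightarrow> P i) \<longleftrightarrow> (\<exists>i'\<in>Field (Restr W D2). \<forall>i. lt (Restr W D2) i' i \<longrightarrow> P i)"
proof -
  have F2: "Field (Restr W D2) = D2" using wo_Restr_Field[OF wo] U by blast
  show ?thesis
  proof
    assume "\<exists>i'\<in>Field W. \<forall>i. lt W i' i \<longrightarrow> P i"
    then obtain i' where i': "i' \<in> Field W" "\<forall>i. lt W i' i \<longrightarrow> P i" by blast
    show "\<exists>i'\<in>Field (Restr W D2). \<forall>i. lt (Restr W D2) i' i \<longrightarrow> P i"
    proof (cases "i' \<in> D2")
      case True
      then show ?thesis using i' F2 unfolding lt_Restr by blast
    next
      case False
      then have "i' \<in> D1" using i' U by blast
      obtain j where j: "j \<in> D2" using n2 by blast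
      have "(i', j) \<in> W" using ord j \<open>i' \<in> D1\<close> by blast
      then have "\<forall>i. lt (Restr W D2) j i \<longrightarrow> P i" using i'(2) le_lt_trans[OF wo] unfolding lt_Restr by blast
      then show ?thesis using j F2 by blast
    qed
  next
    assume "\<exists>i'\<in>Field (Restr W D2). \<forall>i. lt (Restr W D2) i' i \<longrightarrow> P i"
    then obtain i' where i': "i' \<in> D2" "\<forall>i. lt (Restr W D2) i' i \<longrightarrow> P i" using F2 by blast
    have "P i" if l: "lt W i' i" for i
    proof -
      have "i \<in> Field W" using lt_field[OF l] by blast
      moreover have "i \<notin> D1" using ord i'(1) lt_asym[OF wo l] by blast
      ultimately have "i \<in> D2" using U by blast
      then show ?thesis using i' l unfolding lt_Restr by blast
    qed
    then show "\<exists>i'\<in>Field W. \<forall>i. lt W i' i \<longrightarrow> P i" using i'(1) U by blast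
  qed
qed

lemma split_props:
  assumes wo: "Well_order W" and U: "D1 \<union> D2 = Field W" and dis: "D1 \<inter> D2 = {}"
    and n1: "D1 \<noteq> {}" and n2: "D2 \<noteq> {}" and ord: "\<forall>i\<in>D1. \<forall>j\<in>D2. (i,j) \<in> W"
  shows "seq_mind (tz, W, a) = min (seq_mind (tz, Restr W D1, a)) (seq_mind (tt, Restr W D2, a))"
    and "seq_conv T (tz, W, a) \<longleftrightarrow> seq_conv T (tt, Restr W D2, a)"
    and "seq_tgt T (tz, W, a) = seq_tgt T (tt, Restr W D2, a)"
proof -
  have F1: "Field (Restr W D1) = D1" using wo_Restr_Field[OF wo] U by blast
  have F2: "Field (Restr W D2) = D2" using wo_Restr_Field[OF wo] U by blast
  have ne: "Field W \<noteq> {}" using U n1 by blast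
  show "seq_mind (tz, W, a) = min (seq_mind (tz, Restr W D1, a)) (seq_mind (tt, Restr W D2, a))"
    using ne n1 n2 F1 F2 U[symmetric] by (simp add: INF_union inf_min)
  have hm: "has_max W \<longleftrightarrow> has_max (Restr W D2)"
  proof
    assume "has_max W"
    then obtain m where m: "m \<in> Field W" "\<forall>i\<in>Field W. (i, m) \<in> W" unfolding has_max_def by blast
    have "m \<in> D2"
    proof (rule ccontr)
      assume "m \<notin> D2"
      then have "m \<in> D1" using m U by blast
      obtain j where j: "j \<in> D2" using n2 by blast
      have "(m, j) \<in> W" "(j, m) \<in> W" using ord j \<open>m \<in> D1\<close> m U by blast+
      then have "m = j" using wo_antisym[OF wo] by blast
      then show False using \<open>m \<notin> D2\<close> j by blast
    qed
    then show "has_max (Restr W D2)" using m F2 U unfolding has_max_def by blast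
  next
    assume "has_max (Restr W D2)"
    then obtain m where m: "m \<in> D2" "\<forall>i\<in>D2. (i, m) \<in> W" unfolding has_max_def F2 by blast
    then have "\<forall>i\<in>Field W. (i, m) \<in> W" using ord U by blast
    then show "has_max W" using m U unfolding has_max_def by blast
  qed
  note te = tail_equiv[OF wo U dis n2 ord]
  have le: "lim_end W f L \<longleftrightarrow> lim_end (Restr W D2) f L" for f L
    unfolding lim_end_agree using te by blast
  have de: "depth_end W f \<longleftrightarrow> depth_end (Restr W D2) f" for f
    unfolding depth_end_def using te by blast
  have le2: "(\<lambda>L. is_term T L \<and> lim_end W (\<lambda>i. st_tgt T (a i)) L) =
     (\<lambda>L. is_term T L \<and> lim_end (Restr W D2) (\<lambda>i. st_tgt T (a i)) L)" using le by blast
  show "seq_conv T (tz, W, a) \<longleftrightarrow> seq_conv T (tt, Restr W D2, a)"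
    using ne n2 F2 hm le2 de by (simp add: fun_eq_iff)
  show "seq_tgt T (tz, W, a) = seq_tgt T (tt, Restr W D2, a)"
  proof (cases "has_max W")
    case True
    then obtain m where m: "m \<in> D2" "\<forall>i\<in>D2. (i, m) \<in> Restr W D2" using hm unfolding has_max_def F2 by blast
    have m2: "m \<in> Field (Restr W D2)" "\<forall>i\<in>Field (Restr W D2). (i, m) \<in> Restr W D2" using m F2 by auto
    have mW: "m \<in> Field W" "\<forall>i\<in>Field W. (i, m) \<in> W" using m ord U by blast+
    show ?thesis using True hm ne n2 F2 max_the[OF wo mW] max_the[OF Well_order_Restr[OF wo] m2] by simp
  next
    case False
    then show ?thesis using hm ne n2 F2 le2 by simp
  qed
qed

lemma split:
  assumes r: "red_seq T (t0, W, a)" and U: "D1 \<union> D2 = Field W" and dis: "D1 \<inter> D2 = {}"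
    and n1: "D1 \<noteq> {}" and n2: "D2 \<noteq> {}" and ord: "\<forall>i\<in>D1. \<forall>j\<in>D2. (i,j) \<in> W"
  shows "red_seq T (t0, Restr W D1, a) \<and> seq_conv T (t0, Restr W D1, a) \<and>
         red_seq T (seq_tgt T (t0, Restr W D1, a), Restr W D2, a)"
proof -
  note rr = r[unfolded red_seq.simps]
  have wo: "Well_order W" using rr by blast
  have F1: "Field (Restr W D1) = D1" using wo_Restr_Field[OF wo] U by blast
  have F2: "Field (Restr W D2) = D2" using wo_Restr_Field[OF wo] U by blast
  have c1: "cvx W D1"
    unfolding cvx_def
  proof (intro conjI allI impI)
    show "D1 \<subseteq> Field W" using U by blast
    fix i j k assume h: "i \<in> D1" "k \<in> D1" "(i, j) \<in> W" "(j, k) \<in> W"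
    have "j \<in> Field W" using h(3) by (rule FieldI2)
    show "j \<in> D1"
    proof (rule ccontr)
      assume "j \<notin> D1"
      then have "j \<in> D2" using \<open>j \<in> Field W\<close> U by blast
      then have "(k, j) \<in> W" using ord h(2) by blast
      then have "j = k" using wo_antisym[OF wo] h(4) by blast
      then show False using \<open>j \<notin> D1\<close> h(2) by blast
    qed
  qed
  have c2: "cvx W D2"
    unfolding cvx_def
  proof (intro conjI allI impI)
    show "D2 \<subseteq> Field W" using U by blast
    fix i j k assume h: "i \<in> D2" "k \<in> D2" "(i, j) \<in> W" "(j, k) \<in> W"
    have "j \<in> Field W" using h(3) by (rule FieldI2)
    show "j \<in> D2"
    proof (rule ccontr)
      assume "j \<notin> D2"
      then have "j \<in> D1" using \<open>j \<in> Field W\<close> U by blast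
      then have "(j, i) \<in> W" using ord h(1) by blast
      then have "j = i" using wo_antisym[OF wo] h(3) by blast
      then show False using \<open>j \<notin> D2\<close> h(1) by blast
    qed
  qed
  obtain j0 where j0: "j0 \<in> D2" "\<forall>j\<in>D2. (j0, j) \<in> W" using wo_min[OF wo _ n2] U by blast
  have r1: "red_seq T (t0, Restr W D1, a)"
  proof (rule red_seq_Restr[OF r c1])
    show "is_term T t0" using rr by blast
    show "\<forall>i\<in>D1. (\<forall>j\<in>D1. (i, j) \<in> W) \<longrightarrow> st_src (a i) = t0"
    proof (intro ballI impI)
      fix i assume i: "i \<in> D1" "\<forall>j\<in>D1. (i, j) \<in> W"
      then have "\<forall>j\<in>Field W. (i, j) \<in> W" using ord U by blast
      then show "st_src (a i) = t0" using rr i(1) U by blast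
    qed
  qed
  have j0F: "j0 \<in> Field W" using j0 U by blast
  have below_j0: "i \<in> D1" if "lt W i j0" for i
  proof -
    have "i \<in> Field W" using lt_field[OF that] by blast
    moreover have "i \<notin> D2" using j0 lt_asym[OF wo that] by blast
    ultimately show ?thesis using U by blast
  qed
  have lt_j0: "lt W i j0" if "i \<in> D1" for i
    using ord that j0(1) dis unfolding lt_def by blast
  have ct: "seq_conv T (t0, Restr W D1, a) \<and> seq_tgt T (t0, Restr W D1, a) = st_src (a j0)"
  proof (cases "has_max (Restr W D1)")
    case True
    then obtain m1 where m1: "m1 \<in> D1" "\<forall>i\<in>D1. (i, m1) \<in> Restr W D1" unfolding has_max_def F1 by blast
    have m1': "m1 \<in> Field (Restr W D1)" "\<forall>i\<in>Field (Restr W D1). (i, m1) \<in> Restr W D1" using m1 F1 by auto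
    have tg: "seq_tgt T (t0, Restr W D1, a) = st_tgt T (a m1)"
      using True n1 F1 max_the[OF Well_order_Restr[OF wo] m1'] by simp
    have "is_succ W m1 j0"
      unfolding is_succ_def
    proof
      show "lt W m1 j0" using lt_j0 m1(1) .
      show "\<not> (\<exists>k. lt W m1 k \<and> lt W k j0)"
      proof
        assume "\<exists>k. lt W m1 k \<and> lt W k j0"
        then obtain k where k: "lt W m1 k" "lt W k j0" by blast
        have "k \<in> D1" using below_j0 k(2) .
        then have "(k, m1) \<in> W" using m1 by blast
        then show False using lt_asym[OF wo k(1)] by blast
      qed
    qed
    then have "st_src (a j0) = st_tgt T (a m1)" using rr by blast
    then show ?thesis using tg True by simp
  next
    case nm: False
    have lim: "is_limit W j0"
      unfolding is_limit_def
    proof (intro conjI)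
      show "j0 \<in> Field W" by fact
      obtain i where "i \<in> D1" using n1 by blast
      then show "\<exists>i. lt W i j0" using lt_j0 by blast
      show "\<not> (\<exists>i. is_succ W i j0)"
      proof
        assume "\<exists>i. is_succ W i j0"
        then obtain i where s: "is_succ W i j0" by blast
        then have "lt W i j0" unfolding is_succ_def by blast
        then have iD: "i \<in> D1" using below_j0 by blast
        obtain i2 where "lt (Restr W D1) i i2"
          using nomax_above[OF Well_order_Restr[OF wo] nm] iD F1 by blast
        then have "lt W i i2" "lt W i2 j0" using lt_j0 unfolding lt_Restr by blast+
        then show False using s unfolding is_succ_def by blast
      qed
    qed
    have L: "lim_below W (\<lambda>i. st_tgt T (a i)) j0 (st_src (a j0))" and
      D: "depth_below W (\<lambda>i. st_depth (a i)) j0" using rr lim by blast+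
    have le: "lim_end (Restr W D1) (\<lambda>i. st_tgt T (a i)) (st_src (a j0))"
      unfolding lim_end_agree
    proof
      fix k
      obtain i' where i': "lt W i' j0" "\<forall>i. lt W i' i \<and> lt W i j0 \<longrightarrow> agree k (st_tgt T (a i)) (st_src (a j0))"
        using L unfolding lim_below_agree by blast
      have "i' \<in> D1" using below_j0 i'(1) .
      moreover have "\<forall>i. lt (Restr W D1) i' i \<longrightarrow> agree k (st_tgt T (a i)) (st_src (a j0))"
        using i'(2) lt_j0 unfolding lt_Restr by blast
      ultimately show "\<exists>i'\<in>Field (Restr W D1). \<forall>i. lt (Restr W D1) i' i \<longrightarrow> agree k (st_tgt T (a i)) (st_src (a j0))"
        using F1 by blast
    qed
    have de: "depth_end (Restr W D1) (\<lambda>i. st_depth (a i))"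
      unfolding depth_end_def
    proof
      fix k
      obtain i' where i': "lt W i' j0" "\<forall>i. lt W i' i \<and> lt W i j0 \<longrightarrow> k < st_depth (a i)"
        using D unfolding depth_below_def by blast
      have "i' \<in> D1" using below_j0 i'(1) .
      moreover have "\<forall>i. lt (Restr W D1) i' i \<longrightarrow> k < st_depth (a i)"
        using i'(2) lt_j0 unfolding lt_Restr by blast
      ultimately show "\<exists>i'\<in>Field (Restr W D1). \<forall>i. lt (Restr W D1) i' i \<longrightarrow> k < st_depth (a i)"
        using F1 by blast
    qed
    have tm: "is_term T (st_src (a j0))" using rr j0F red_step_term by blast
    have "seq_conv T (t0, Restr W D1, a)" using le de tm by auto
    moreover have "seq_tgt T (t0, Restr W D1, a) = st_src (a j0)"
      using seq_tgt_lim[OF Well_order_Restr[OF wo] _ nm tm le] n1 F1 by blast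
    ultimately show ?thesis by blast
  qed
  have r2: "red_seq T (seq_tgt T (t0, Restr W D1, a), Restr W D2, a)"
  proof (rule red_seq_Restr[OF r c2])
    show "is_term T (seq_tgt T (t0, Restr W D1, a))" using ct rr j0F red_step_term by metis
    show "\<forall>i\<in>D2. (\<forall>j\<in>D2. (i, j) \<in> W) \<longrightarrow> st_src (a i) = seq_tgt T (t0, Restr W D1, a)"
    proof (intro ballI impI)
      fix i assume i: "i \<in> D2" "\<forall>j\<in>D2. (i, j) \<in> W"
      then have "i = j0" using j0 wo_antisym[OF wo] by blast
      then show "st_src (a i) = seq_tgt T (t0, Restr W D1, a)" using ct by simp
    qed
  qed
  show ?thesis using r1 r2 ct by blast
qed


lemma Field_lexrel: "Field (lexrel S) = S"
  unfolding lexrel_def Field_def by auto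

lemma lexrel_app: "(u @ p, u @ q) \<in> lexord {(a, b). a < (b::nat)} \<longleftrightarrow> (p, q) \<in> lexord {(a, b). a < b}"
  by (simp add: lexord_same_pref_iff)

lemma subt_subt: "subt (subt \<psi> u) p = subt \<psi> (u @ p)"
  by (simp add: subt_def)

lemma denotes_sub:
  assumes iso: "order_iso (lexrel S) W f" and ds: "\<forall>p\<in>S. denotes_step T (subt \<psi> p) (a (f p))"
    and wo: "Well_order W" and sub: "(\<lambda>p. u @ p) ` S' \<subseteq> S" and psi: "subt \<psi> u = \<psi>'"
  shows "denotes T \<psi>' s' S' (s', Restr W (f ` (\<lambda>p. u @ p) ` S'), a)"
proof -
  let ?g = "\<lambda>p. u @ p"
  let ?D = "f ` ?g ` S'"
  have bij: "bij_betw f S (Field W)" and ordf: "\<forall>x\<in>S. \<forall>y\<in>S. (x, y) \<in> lexrel S \<longleftrightarrow> (f x, f y) \<in> W"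
    using iso unfolding order_iso_def Field_lexrel by auto
  have injf: "inj_on f S" using bij bij_betw_def by blast
  have DF: "?D \<subseteq> Field W" using bij sub bij_betw_imp_surj_on by blast
  have FD: "Field (Restr W ?D) = ?D" using wo_Restr_Field[OF wo DF] .
  have b1: "bij_betw ?g S' (?g ` S')" by (simp add: bij_betw_def inj_on_def)
  have b2: "bij_betw f (?g ` S') ?D" using inj_on_subset[OF injf sub] by (simp add: bij_betw_def)
  have b: "bij_betw (f \<circ> ?g) S' ?D" using bij_betw_trans[OF b1 b2] .
  have o: "(x, y) \<in> lexrel S' \<longleftrightarrow> ((f \<circ> ?g) x, (f \<circ> ?g) y) \<in> Restr W ?D" if x: "x \<in> S'" and y: "y \<in> S'" for x y
  proof -
    have gx: "u @ x \<in> S" and gy: "u @ y \<in> S" using sub x y by auto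
    have "(x, y) \<in> lexrel S' \<longleftrightarrow> (u @ x, u @ y) \<in> lexrel S"
      using x y gx gy unfolding lexrel_def by (auto simp: lexrel_app)
    also have "\<dots> \<longleftrightarrow> (f (u @ x), f (u @ y)) \<in> W" using ordf gx gy by blast
    also have "\<dots> \<longleftrightarrow> ((f \<circ> ?g) x, (f \<circ> ?g) y) \<in> Restr W ?D" using x y by auto
    finally show ?thesis .
  qed
  have "order_iso (lexrel S') (Restr W ?D) (f \<circ> ?g)"
    unfolding order_iso_def Field_lexrel FD using b o by blast
  moreover have "\<forall>p\<in>S'. denotes_step T (subt \<psi>' p) (a ((f \<circ> ?g) p))"
  proof
    fix p assume "p \<in> S'"
    then have "u @ p \<in> S" using sub by auto
    then show "denotes_step T (subt \<psi>' p) (a ((f \<circ> ?g) p))"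
      using ds psi subt_subt by (metis comp_apply)
  qed
  ultimately show ?thesis by auto
qed

lemma stepwise_ne: "stepwise T \<psi> s t m c S \<Longrightarrow> S \<noteq> {}"
  by (induction rule: stepwise.induct) auto

lemma subt_comp0: "subt (comp \<psi>1 \<psi>2) [0] = \<psi>1"
  by (simp add: subt_def comp_def fun_eq_iff)
lemma subt_comp1: "subt (comp \<psi>1 \<psi>2) [1] = \<psi>2" "subt (comp \<psi>1 \<psi>2) [Suc 0] = \<psi>2"
  by (simp_all add: subt_def comp_def fun_eq_iff)
lemma takeWhile_rep: "takeWhile (\<lambda>i. i = Suc 0) (replicate k (Suc 0) @ 0 # r) = replicate k (Suc 0)"
  by (induction k) auto
lemma subt_prod: "subt (prod \<psi>s) (replicate k 1 @ [0]) = \<psi>s k"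
  by (simp add: subt_def prod_def fun_eq_iff takeWhile_rep Let_def)

lemma lexord_blocks: "k < j \<Longrightarrow> ((replicate k 1 @ [0]) @ p, (replicate j 1 @ [0]) @ q) \<in> lexord {(a, b). a < (b::nat)}"
proof -
  assume "k < j"
  then obtain d where j: "j = Suc (k + d)" using less_imp_Suc_add by blast
  have e1: "(replicate k (1::nat) @ [0]) @ p = replicate k 1 @ (0 # p)" by simp
  have "replicate j (1::nat) = replicate k 1 @ replicate (Suc d) 1" unfolding j
    by (metis add_Suc_right replicate_add)
  then have e2: "(replicate j (1::nat) @ [0]) @ q = replicate k 1 @ (1 # (replicate d 1 @ 0 # q))" by simp
  have "(0 # p, 1 # (replicate d 1 @ 0 # q)) \<in> lexord {(a, b). a < (b::nat)}" by simp
  then show ?thesis unfolding e1 e2 lexord_same_pref_iff by blast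
qed


lemma iso_bij: "order_iso (lexrel S) W f \<Longrightarrow> bij_betw f S (Field W)"
  unfolding order_iso_def Field_lexrel by (rule conjunct1)

lemma iso_iff: "order_iso (lexrel S) W f \<Longrightarrow> x \<in> S \<Longrightarrow> y \<in> S \<Longrightarrow> (x, y) \<in> lexrel S \<longleftrightarrow> (f x, f y) \<in> W"
  unfolding order_iso_def Field_lexrel by blast

lemma iso_field: "order_iso (lexrel S) W f \<Longrightarrow> Field W = f ` S"
  using bij_betw_imp_surj_on[OF iso_bij] by metis

lemma iso_ord: "order_iso (lexrel S) W f \<Longrightarrow> x \<in> S \<Longrightarrow> y \<in> S \<Longrightarrow> (x, y) \<in> lexord {(a, b). a < (b::nat)} \<Longrightarrow>
   lt W (f x) (f y)"
proof -
  assume iso: "order_iso (lexrel S) W f" and xy: "x \<in> S" "y \<in> S" "(x, y) \<in> lexord {(a, b). a < (b::nat)}"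
  have "x \<noteq> y" using xy(3) lexord_irreflexive[of "{(a, b). a < (b::nat)}" x] by auto
  moreover have "inj_on f S" using iso_bij[OF iso] by (simp add: bij_betw_def)
  ultimately have "f x \<noteq> f y" using xy(1,2) unfolding inj_on_def by blast
  moreover have "(x, y) \<in> lexrel S" using xy unfolding lexrel_def by blast
  then have "(f x, f y) \<in> W" using iso_iff[OF iso xy(1,2)] by blast
  ultimately show ?thesis unfolding lt_def by blast
qed

lemma one_case:
  assumes os: "one_step T \<psi>" and r: "red_seq T (t0, W, a)"
    and d: "denotes T \<psi> (src1 T \<psi>) {[]} (t0, W, a)"
  shows "enat (length (rpos \<psi>)) = seq_mind (t0, W, a) \<and> (True \<longleftrightarrow> seq_conv T (t0, W, a)) \<and>
         (True \<longrightarrow> Some (tgt1 T \<psi>) = Some (seq_tgt T (t0, W, a)))"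
proof -
  have wo: "Well_order W" using r by simp
  obtain f where iso: "order_iso (lexrel {[]}) W f" and ds: "denotes_step T (subt \<psi> []) (a (f []))"
    using d by auto
  have F: "Field W = {f []}" using iso_field[OF iso] by simp
  obtain t p \<mu> \<sigma> where ai: "a (f []) = (t, p, \<mu>, \<sigma>)" by (cases "a (f [])") auto
  have sp: "subt \<psi> [] = \<psi>" by (simp add: subt_def)
  have ds': "tgt1 T \<psi> = st_tgt T (t, p, \<mu>, \<sigma>)" "\<psi> p = Some (Rs \<mu>)" using ds ai sp by auto
  have "rpos \<psi> = p"
    unfolding rpos_def
  proof (rule the1_equality)
    show "\<exists>!p. \<exists>\<mu>. \<psi> p = Some (Rs \<mu>)" using os unfolding one_step_def by blast
    show "\<exists>\<mu>. \<psi> p = Some (Rs \<mu>)" using ds' by blast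
  qed
  then have m: "enat (length (rpos \<psi>)) = seq_mind (t0, W, a)" using F ai by simp
  have mx: "f [] \<in> Field W" "\<forall>i\<in>Field W. (i, f []) \<in> W" using F wo_refl[OF wo] by auto
  have hm: "has_max W" using mx unfolding has_max_def by blast
  have "seq_tgt T (t0, W, a) = st_tgt T (a (f []))" using F hm max_the[OF wo mx] by simp
  then show ?thesis using m hm F ds' ai by simp
qed

lemma cmp_case:
  assumes S1: "S1 \<noteq> {}" and S2: "S2 \<noteq> {}"
    and IH1: "\<And>t0 (W::'i rel) a. red_seq T (t0, W, a) \<Longrightarrow> denotes T \<psi>1 s1 S1 (t0, W, a) \<Longrightarrow>
       m1 = seq_mind (t0, W, a) \<and> (c1 \<longleftrightarrow> seq_conv T (t0, W, a)) \<and> (c1 \<longrightarrow> Some t1 = Some (seq_tgt T (t0, W, a)))"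
    and IH2: "\<And>t0 (W::'i rel) a. red_seq T (t0, W, a) \<Longrightarrow> denotes T \<psi>2 t1 S2 (t0, W, a) \<Longrightarrow>
       m2 = seq_mind (t0, W, a) \<and> (c2 \<longleftrightarrow> seq_conv T (t0, W, a)) \<and> (c2 \<longrightarrow> t2 = Some (seq_tgt T (t0, W, a)))"
    and r: "red_seq T (t0, W::'i rel, a)"
    and d: "denotes T (comp \<psi>1 \<psi>2) s1 ((\<lambda>p. 0 # p) ` S1 \<union> (\<lambda>p. 1 # p) ` S2) (t0, W, a)"
  shows "min m1 m2 = seq_mind (t0, W, a) \<and> (c2 \<longleftrightarrow> seq_conv T (t0, W, a)) \<and> (c2 \<longrightarrow> t2 = Some (seq_tgt T (t0, W, a)))"
proof -
  let ?S = "(\<lambda>p. 0 # p) ` S1 \<union> (\<lambda>p. 1 # p) ` S2"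
  have wo: "Well_order W" using r by simp
  obtain f where iso: "order_iso (lexrel ?S) W f" and ds: "\<forall>p\<in>?S. denotes_step T (subt (comp \<psi>1 \<psi>2) p) (a (f p))"
    and s1: "s1 = t0" using d by auto
  define D1 where "D1 = f ` (\<lambda>p. [0] @ p) ` S1"
  define D2 where "D2 = f ` (\<lambda>p. [1] @ p) ` S2"
  have inj: "inj_on f ?S" using iso unfolding order_iso_def Field_lexrel bij_betw_def by blast
  have U: "D1 \<union> D2 = Field W" unfolding D1_def D2_def iso_field[OF iso] by auto
  have dis: "D1 \<inter> D2 = {}"
  proof -
    have "f x \<noteq> f y" if xy: "x \<in> (\<lambda>p. 0 # p) ` S1" "y \<in> (\<lambda>p. 1 # p) ` S2" for x y
    proof -
      have "x \<noteq> y" using xy by auto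
      moreover have "x \<in> ?S" "y \<in> ?S" using xy by auto
      ultimately show ?thesis using inj unfolding inj_on_def by blast
    qed
    then show ?thesis unfolding D1_def D2_def by auto
  qed
  have n1: "D1 \<noteq> {}" and n2: "D2 \<noteq> {}" using S1 S2 unfolding D1_def D2_def by auto
  have ord: "\<forall>i\<in>D1. \<forall>j\<in>D2. (i, j) \<in> W"
  proof (intro ballI)
    fix i j assume "i \<in> D1" "j \<in> D2"
    then obtain p q where pq: "p \<in> S1" "q \<in> S2" "i = f (0 # p)" "j = f (1 # q)" unfolding D1_def D2_def by auto
    have "lt W (f (0 # p)) (f (1 # q))" using iso_ord[OF iso] pq by simp
    then show "(i, j) \<in> W" using pq unfolding lt_def by blast
  qed
  from split[OF r U dis n1 n2 ord] have
    r1: "red_seq T (t0, Restr W D1, a)" and cv1: "seq_conv T (t0, Restr W D1, a)"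
    and r2: "red_seq T (seq_tgt T (t0, Restr W D1, a), Restr W D2, a)" by blast+
  have d1: "denotes T \<psi>1 s1 S1 (t0, Restr W D1, a)"
    unfolding s1 D1_def by (rule denotes_sub[OF iso ds wo]) (auto simp: subt_comp0)
  from IH1[OF r1 d1] cv1 have m1: "m1 = seq_mind (t0, Restr W D1, a)"
    and t1: "t1 = seq_tgt T (t0, Restr W D1, a)" by auto
  have d2: "denotes T \<psi>2 t1 S2 (t1, Restr W D2, a)"
    unfolding D2_def by (rule denotes_sub[OF iso ds wo]) (auto simp: subt_comp1)
  from IH2[OF r2[folded t1] d2] have
    h2: "m2 = seq_mind (t1, Restr W D2, a)" "c2 \<longleftrightarrow> seq_conv T (t1, Restr W D2, a)"
       "c2 \<longrightarrow> t2 = Some (seq_tgt T (t1, Restr W D2, a))" by auto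
  note sp = split_props(1)[OF wo U dis n1 n2 ord, where tz=t0 and a=a and tt=t1]
    split_props(2)[OF wo U dis n1 n2 ord, where tz=t0 and a=a and tt=t1 and T=T]
    split_props(3)[OF wo U dis n1 n2 ord, where tz=t0 and a=a and tt=t1 and T=T]
  show ?thesis using sp h2 m1 by simp
qed


lemma INF_UNION': "(INF x\<in>(\<Union>y\<in>A. g y). f x) = (INF y\<in>A. INF x\<in>g y. (f x :: _ :: complete_lattice))"
  by (rule order_antisym) (blast intro: INF_greatest INF_lower2)+

lemma enat_less_INF: "enat n < (INF i\<in>D. enat (g i)) \<longleftrightarrow> (\<forall>i\<in>D. n < g i)"
proof
  assume h: "enat n < (INF i\<in>D. enat (g i))"
  show "\<forall>i\<in>D. n < g i"
  proof
    fix i assume "i \<in> D"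
    then have "(INF i\<in>D. enat (g i)) \<le> enat (g i)" by (rule INF_lower)
    then have "enat n < enat (g i)" using h by (rule order.strict_trans2[rotated])
    then show "n < g i" by simp
  qed
next
  assume h: "\<forall>i\<in>D. n < g i"
  have "enat (Suc n) \<le> (INF i\<in>D. enat (g i))" using h by (intro INF_greatest) (simp add: Suc_le_eq)
  then show "enat n < (INF i\<in>D. enat (g i))"
    by (meson Suc_ile_eq order.strict_trans2 order_refl)
qed

lemma prd_case:
  fixes W :: "'i rel" and s :: "nat \<Rightarrow> ('f,'v,'r) tm" and m :: "nat \<Rightarrow> enat"
  assumes Sne: "\<And>i. S i \<noteq> {}"
    and IH: "\<And>i t0 (W'::'i rel) a. red_seq T (t0, W', a) \<Longrightarrow> denotes T (\<psi>s i) (s i) (S i) (t0, W', a) \<Longrightarrow>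
       m i = seq_mind (t0, W', a) \<and> (True \<longleftrightarrow> seq_conv T (t0, W', a)) \<and>
       (True \<longrightarrow> Some (s (Suc i)) = Some (seq_tgt T (t0, W', a)))"
    and r: "red_seq T (t0, W, a)"
    and d: "denotes T (prod \<psi>s) (s 0) (\<Union>k. (\<lambda>p. replicate k 1 @ 0 # p) ` S k) (t0, W, a)"
  shows "(INF i. m i) = seq_mind (t0, W, a) \<and>
    ((\<forall>k::nat. \<exists>N. \<forall>j\<ge>N. enat k < m j) \<longleftrightarrow> seq_conv T (t0, W, a)) \<and>
    ((\<forall>k::nat. \<exists>N. \<forall>j\<ge>N. enat k < m j) \<longrightarrow> seq_lim T s = Some (seq_tgt T (t0, W, a)))"
proof -
  let ?SS = "\<Union>k. (\<lambda>p. replicate k 1 @ 0 # p) ` S k"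
  have wo: "Well_order W" using r by simp
  obtain f where iso: "order_iso (lexrel ?SS) W f" and ds: "\<forall>p\<in>?SS. denotes_step T (subt (prod \<psi>s) p) (a (f p))"
    and s0: "s 0 = t0" using d by auto
  define D where "D k = f ` (\<lambda>p. (replicate k 1 @ [0]) @ p) ` S k" for k
  have sub: "(\<lambda>p. (replicate k 1 @ [0]) @ p) ` S k \<subseteq> ?SS" for k by auto
  have FW: "Field W = (\<Union>k. D k)" unfolding iso_field[OF iso] D_def by auto
  have Dne: "D k \<noteq> {}" for k using Sne[of k] unfolding D_def by auto
  have DF: "D k \<subseteq> Field W" for k using FW by blast
  have blk_lt: "lt W i i'" if bl: "i \<in> D k" "i' \<in> D j" "k < j" for i i' k j
  proof -
    obtain p where p: "p \<in> S k" "i = f ((replicate k 1 @ [0]) @ p)" using bl(1) unfolding D_def by blast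
    obtain q where q: "q \<in> S j" "i' = f ((replicate j 1 @ [0]) @ q)" using bl(2) unfolding D_def by blast
    have "(replicate k 1 @ [0]) @ p \<in> ?SS" "(replicate j 1 @ [0]) @ q \<in> ?SS" using p q by auto
    then show ?thesis using iso_ord[OF iso _ _ lexord_blocks[OF bl(3)]] p q by blast
  qed
  have lt_irr: "\<not> lt W i i" for i unfolding lt_def by blast
  have after: "k \<le> j" if "i' \<in> D k" "i \<in> D j" "lt W i' i" for i i' k j
  proof (rule ccontr)
    assume "\<not> k \<le> j"
    then have "lt W i i'" using blk_lt that by simp
    then show False using lt_asym[OF wo that(3)] unfolding lt_def by blast
  qed
  have inD: "\<exists>j. i \<in> D j" if "i \<in> Field W" for i using that FW by blast
  define E where "E k = (\<Union>j\<in>{k..}. D j)" for k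
  have E0: "E 0 = Field W" unfolding E_def FW by auto
  have ES: "E k = D k \<union> E (Suc k)" for k
  proof -
    have "{k..} = insert k {Suc k..}" by auto
    then show ?thesis unfolding E_def by auto
  qed
  have EF: "E k \<subseteq> Field W" for k unfolding E_def FW by auto
  have DE: "D k \<subseteq> E k" for k unfolding E_def by auto
  have ordE: "\<forall>i\<in>D k. \<forall>j\<in>E (Suc k). (i, j) \<in> Restr W (E k)" for k
  proof (intro ballI)
    fix i j assume ij: "i \<in> D k" "j \<in> E (Suc k)"
    then obtain j' where "j \<in> D j'" "Suc k \<le> j'" unfolding E_def by auto
    then have "lt W i j" using blk_lt ij(1) by simp
    then show "(i, j) \<in> Restr W (E k)" using ij ES unfolding lt_def by blast
  qed
  have disE: "D k \<inter> E (Suc k) = {}" for k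
  proof -
    have "i \<notin> E (Suc k)" if "i \<in> D k" for i
    proof
      assume "i \<in> E (Suc k)"
      then obtain j' where "i \<in> D j'" "Suc k \<le> j'" unfolding E_def by auto
      then have "lt W i i" using blk_lt that by simp
      then show False using lt_irr by blast
    qed
    then show ?thesis by blast
  qed
  have den: "denotes T (\<psi>s k) (s k) (S k) (s k, Restr W (D k), a)" for k
    unfolding D_def by (rule denotes_sub[OF iso ds wo sub subt_prod])
  have blk: "red_seq T (s k, Restr W (D k), a) \<and> seq_conv T (s k, Restr W (D k), a) \<and>
      red_seq T (s (Suc k), Restr W (E (Suc k)), a) \<and> m k = seq_mind (s k, Restr W (D k), a) \<and>
      seq_tgt T (s k, Restr W (D k), a) = s (Suc k)"
    if rk: "red_seq T (s k, Restr W (E k), a)" for k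
  proof -
    have FE: "Field (Restr W (E k)) = E k" using wo_Restr_Field[OF wo EF] .
    have U: "D k \<union> E (Suc k) = Field (Restr W (E k))" unfolding FE using ES[of k] by (rule sym)
    have n2: "E (Suc k) \<noteq> {}" using DE[of "Suc k"] Dne[of "Suc k"] by blast
    have sp: "red_seq T (s k, Restr (Restr W (E k)) (D k), a) \<and> seq_conv T (s k, Restr (Restr W (E k)) (D k), a) \<and>
         red_seq T (seq_tgt T (s k, Restr (Restr W (E k)) (D k), a), Restr (Restr W (E k)) (E (Suc k)), a)"
      using split[OF rk U disE Dne n2 ordE] .
    have R1: "Restr (Restr W (E k)) (D k) = Restr W (D k)" using Restr_subset[OF DE] .
    have "E (Suc k) \<subseteq> E k" using ES[of k] by blast
    then have R2: "Restr (Restr W (E k)) (E (Suc k)) = Restr W (E (Suc k))" by (rule Restr_subset)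
    have r1: "red_seq T (s k, Restr W (D k), a)" and c1: "seq_conv T (s k, Restr W (D k), a)"
      and r2: "red_seq T (seq_tgt T (s k, Restr W (D k), a), Restr W (E (Suc k)), a)"
      using sp unfolding R1 R2 by blast+
    from IH[OF r1 den] have e1: "m k = seq_mind (s k, Restr W (D k), a)" and e2: "seq_tgt T (s k, Restr W (D k), a) = s (Suc k)"
      by simp_all
    show ?thesis using r1 c1 r2[unfolded e2] e1 e2 by blast
  qed
  have RE: "red_seq T (s k, Restr W (E k), a)" for k
  proof (induction k)
    case 0
    show ?case using r unfolding E0 s0 Restr_Field .
  next
    case (Suc k)
    from blk[OF Suc.IH] show ?case by (elim conjE)
  qed
  note B = blk[OF RE]
  have Br: "red_seq T (s k, Restr W (D k), a)" for k using B[of k] by (rule conjunct1)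
  have Bc: "seq_conv T (s k, Restr W (D k), a)" for k using B[of k] by (elim conjE)
  have Bm: "m k = seq_mind (s k, Restr W (D k), a)" for k using B[of k] by (elim conjE)
  have Bt: "seq_tgt T (s k, Restr W (D k), a) = s (Suc k)" for k using B[of k] by (elim conjE)
  have FD: "Field (Restr W (D k)) = D k" for k using wo_Restr_Field[OF wo DF] .
  have mk: "m k = (INF i\<in>D k. enat (st_depth (a i)))" for k
  proof -
    have "Field (Restr W (D k)) \<noteq> {}" using FD[of k] Dne[of k] by simp
    then show ?thesis using Bm[of k] unfolding seq_mind.simps FD[of k] by simp
  qed
  have mk_iff: "enat n < m k \<longleftrightarrow> (\<forall>i\<in>D k. n < st_depth (a i))" for n k
    unfolding mk enat_less_INF ..
  have neW: "Field W \<noteq> {}" using DF[of 0] Dne[of 0] by blast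
  have nmW: "\<not> has_max W"
  proof
    assume "has_max W"
    then obtain mx where mx: "mx \<in> Field W" "\<forall>i\<in>Field W. (i, mx) \<in> W" unfolding has_max_def by blast
    obtain k where k: "mx \<in> D k" using inD mx(1) by blast
    obtain i where i: "i \<in> D (Suc k)" using Dne by blast
    have "lt W mx i" using blk_lt[OF k i] by simp
    moreover have "i \<in> Field W" using i DF by blast
    ultimately show False using lt_asym[OF wo] mx(2) by blast
  qed
  have part1: "(INF i. m i) = seq_mind (t0, W, a)"
  proof -
    have "seq_mind (t0, W, a) = (INF i\<in>Field W. enat (st_depth (a i)))" using neW by simp
    also have "\<dots> = (INF k. INF i\<in>D k. enat (st_depth (a i)))" unfolding FW by (rule INF_UNION')
    also have "\<dots> = (INF k. m k)" using mk by simp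
    finally show ?thesis by simp
  qed
  have dir1: "seq_conv T (t0, W, a) \<Longrightarrow> (\<forall>k::nat. \<exists>N. \<forall>j\<ge>N. enat k < m j)"
  proof -
    assume cv: "seq_conv T (t0, W, a)"
    then have de: "depth_end W (\<lambda>i. st_depth (a i))" using neW nmW by simp
    show "\<forall>k::nat. \<exists>N. \<forall>j\<ge>N. enat k < m j"
    proof
      fix k
      obtain i' where i': "i' \<in> Field W" "\<forall>i. lt W i' i \<longrightarrow> k < st_depth (a i)"
        using de unfolding depth_end_def by blast
      obtain j0 where j0: "i' \<in> D j0" using inD i'(1) by blast
      have "enat k < m j" if "Suc j0 \<le> j" for j
        unfolding mk_iff
      proof
        fix i assume "i \<in> D j"
        then have "lt W i' i" using blk_lt j0 that by simp
        then show "k < st_depth (a i)" using i'(2) by blast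
      qed
      then show "\<exists>N. \<forall>j\<ge>N. enat k < m j" by blast
    qed
  qed
  have dir2: "seq_conv T (t0, W, a) \<and> seq_lim T s = Some (seq_tgt T (t0, W, a))"
    if c: "\<forall>k::nat. \<exists>N. \<forall>j\<ge>N. enat k < m j"
  proof -
    define N where "N k = (SOME N. \<forall>j\<ge>N. enat k < m j)" for k
    have Nk: "enat k < m j" if "N k \<le> j" for k j
      using someI_ex[OF c[rule_format, of k]] that unfolding N_def by blast
    have dpk: "k < st_depth (a i)" if "N k \<le> j" "i \<in> D j" for k j i
      using Nk[OF that(1)] that(2) unfolding mk_iff by blast
    have dpk': "\<forall>i\<in>Field (Restr W (D j)). k < st_depth (a i)" if "N k \<le> j" for k j
      using dpk[OF that] FD by blast
    have AG: "agree k (s (Suc j)) (s j)" if "N k \<le> j" for k j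
      using stable_tgt[OF Br dpk'[OF that] Bc] Bt by simp
    have AG2: "agree k (s (j + d)) (s j)" if "N k \<le> j" for k j d
    proof (induction d)
      case 0 show ?case using agree_refl by simp
    next
      case (Suc d)
      have "agree k (s (Suc (j + d))) (s (j + d))" using AG[of k "j + d"] that by simp
      then show ?case using agree_trans Suc by simp
    qed
    have AGt: "agree k (st_tgt T (a i)) (s j)" if "N k \<le> j" "i \<in> D j" for k j i
      using stable[OF Br dpk'[OF that(1)]] that(2) FD by blast
    define M where "M k = Max (N ` {..k})" for k
    have NM: "N n \<le> M k" if "n \<le> k" for n k unfolding M_def using that by simp
    define L where "L q = s (N (length q)) q" for q
    have LA: "agree k (s j) L" if "M k \<le> j" for k j
      unfolding agree_def
    proof (intro allI impI)
      fix q :: "nat list" assume q: "length q \<le> k"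
      have j: "N (length q) \<le> j" using NM[OF q] that by simp
      have "agree (length q) (s (N (length q) + (j - N (length q)))) (s (N (length q)))"
        using AG2[OF order_refl] .
      then have "s j q = s (N (length q)) q" using j unfolding agree_def by simp
      then show "s j q = L q" unfolding L_def by simp
    qed
    have trm: "is_term T (s j)" for j using Br[of j] by simp
    have Leq: "L q = s (M k) q" if "length q \<le> k" for q k
      using LA[OF order_refl] that unfolding agree_def by metis
    have LT: "is_term T L"
      unfolding is_term_def wf_tm_def
    proof (intro conjI allI)
      show "L [] \<noteq> None" using Leq[of "[]" 0] trm[of "M 0"] unfolding is_term_def wf_tm_def by simp
      fix p i
      have e1: "L (p @ [i]) = s (M (Suc (length p))) (p @ [i])" using Leq by simp
      have e2: "L p = s (M (Suc (length p))) p" using Leq by simp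
      show "(L (p @ [i]) \<noteq> None) = (\<exists>s. L p = Some s \<and> i < sym_ar T s)"
        unfolding e1 e2 using trm[of "M (Suc (length p))"] unfolding is_term_def wf_tm_def by blast
    next
      fix p sy
      have e2: "L p = s (M (length p)) p" using Leq by simp
      show "L p = Some sy \<longrightarrow> (\<exists>f\<in>sig T. sy = Fs f) \<or> (\<exists>x. sy = Vs x)"
        unfolding e2 using trm[of "M (length p)"] unfolding is_term_def by blast
    qed
    have le: "lim_end W (\<lambda>i. st_tgt T (a i)) L"
      unfolding lim_end_agree
    proof
      fix k
      define j0 where "j0 = max (N k) (M k)"
      obtain i' where i': "i' \<in> D j0" using Dne by blast
      have "agree k (st_tgt T (a i)) L" if hl: "lt W i' i" for i
      proof -
        obtain j where j: "i \<in> D j" using inD lt_field[OF hl] by blast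
        have "j0 \<le> j" using after[OF i' j hl] .
        then have "N k \<le> j" "M k \<le> j" unfolding j0_def by auto
        then show ?thesis using AGt[OF _ j] LA agree_trans by blast
      qed
      then show "\<exists>i'\<in>Field W. \<forall>i. lt W i' i \<longrightarrow> agree k (st_tgt T (a i)) L" using i' DF by blast
    qed
    have de: "depth_end W (\<lambda>i. st_depth (a i))"
      unfolding depth_end_def
    proof
      fix k
      obtain i' where i': "i' \<in> D (N k)" using Dne by blast
      have "k < st_depth (a i)" if hl: "lt W i' i" for i
      proof -
        obtain j where j: "i \<in> D j" using inD lt_field[OF hl] by blast
        have "N k \<le> j" using after[OF i' j hl] .
        then show ?thesis using dpk j by blast
      qed
      then show "\<exists>i'\<in>Field W. \<forall>i. lt W i' i \<longrightarrow> k < st_depth (a i)" using i' DF by blast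
    qed
    have cv: "seq_conv T (t0, W, a)" using neW nmW le de LT by auto
    have tg: "seq_tgt T (t0, W, a) = L" using seq_tgt_lim[OF wo neW nmW LT le] .
    have sl: "\<forall>k. \<exists>N. \<forall>i\<ge>N. agree k (s i) L" using LA by blast
    have "seq_lim T s = Some L"
    proof -
      have ex: "\<exists>L. is_term T L \<and> (\<forall>\<epsilon>>0. \<exists>N. \<forall>i\<ge>N. dist_tm (s i) L < \<epsilon>)"
        using LT sl unfolding seq_lim_cond_agree by blast
      have "(THE L. is_term T L \<and> (\<forall>\<epsilon>>0. \<exists>N. \<forall>i\<ge>N. dist_tm (s i) L < \<epsilon>)) = L"
      proof (rule the_equality)
        show "is_term T L \<and> (\<forall>\<epsilon>>0. \<exists>N. \<forall>i\<ge>N. dist_tm (s i) L < \<epsilon>)"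
          using LT sl unfolding seq_lim_cond_agree by blast
        fix L' assume "is_term T L' \<and> (\<forall>\<epsilon>>0. \<exists>N. \<forall>i\<ge>N. dist_tm (s i) L' < \<epsilon>)"
        then show "L' = L" using seq_lim_unique[OF _ sl] unfolding seq_lim_cond_agree by blast
      qed
      then show ?thesis using ex unfolding seq_lim_def by simp
    qed
    then show ?thesis using cv tg by simp
  qed
  show ?thesis using part1 dir1 dir2 by blast
qed


lemma main_stepwise:
  assumes "stepwise T \<psi> s t m c S"
  shows "\<And>t0 (W::'i rel) a. red_seq T (t0, W, a) \<Longrightarrow> denotes T \<psi> s S (t0, W, a) \<Longrightarrow>
    m = seq_mind (t0, W, a) \<and> (c \<longleftrightarrow> seq_conv T (t0, W, a)) \<and> (c \<longrightarrow> t = Some (seq_tgt T (t0, W, a)))"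
  using assms
proof (induction rule: stepwise.induct)
  case (one \<psi>)
  show ?case by (rule one_case[OF one.hyps one.prems])
next
  case (cmp \<psi>1 s1 t1 m1 c1 S1 \<psi>2 t2 m2 c2 S2)
  show ?case by (rule cmp_case[OF stepwise_ne[OF cmp.hyps(1)] stepwise_ne[OF cmp.hyps(2)] cmp.IH(1) cmp.IH(2) cmp.prems])
next
  case (prd \<psi>s s m S)
  show ?case by (rule prd_case[OF stepwise_ne[OF prd.hyps] prd.IH prd.prems])
qed

theorem mainTheorem4:
  fixes T :: "('f,'v,'r) trs" and A :: "('f,'v,'r,'i) rseq"
  assumes "trs_ok T"
    and "red_seq T A"
    and "stepwise_or_normal T \<psi> s t m c S"
    and "denotes T \<psi> s S A"
  shows "m = seq_mind A \<and> (c \<longleftrightarrow> seq_conv T A) \<and> (c \<longrightarrow> t = Some (seq_tgt T A))"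
proof -
  obtain t0 W a where A: "A = (t0, W, a)" by (cases A) auto
  have r: "red_seq T (t0, W, a)" and d: "denotes T \<psi> s S (t0, W, a)" using assms(2,4) A by auto
  show ?thesis
  proof (cases "stepwise T \<psi> s t m c S")
    case True
    show ?thesis unfolding A by (rule main_stepwise[OF True r d])
  next
    case False
    then have n: "s = \<psi>" "t = Some \<psi>" "m = \<infinity>" "c" "S = {}"
      using assms(3) unfolding stepwise_or_normal_def by auto
    obtain f where iso: "order_iso (lexrel S) W f" and s0: "s = t0" using d by auto
    have "Field W = {}" using iso_field[OF iso] n(5) by simp
    then show ?thesis unfolding A using n s0 by simp
  qed
qed

end
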